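(* Let $H=(V,E)$ be a $3$-uniform hypergraph with at least one edge, without pendant vertices (vertices of degree $1$), whose $2$-intersection graph $\mathcal L_2(H)$ is connected. Then $H$ is eulerian.
   Context: A hypergraph $H=(V,E)$ consists of a finite nonempty vertex set $V$, a finite edge set $E$ disjoint from $V$, and an incidence function assigning to each edge $e\in E$ a subset of $V$ (also denoted $e$); distinct edges may have the same vertex set. $H$ is $3$-uniform if $|e|=3$ for all $e\in E$. The degree of a vertex is the number of edges containing it. A walk is a sequence $W=v_0e_1v_1e_2\cdots e_kv_k$ with $v_i\in V$, $e_i\in E$, such that for each $i$, $v_{i-1}\ne v_i$ and $v_{i-1},v_i\in e_i$. $W$ is closed if $k\ge 2$ and $v_0=v_k$; it is a strict trail if $e_1,\dots,e_k$ are pairwise distinct. An Euler tour of $H$ is a closed strict trail traversing every edge of $H$; $H$ is eulerian if it has one. The $2$-intersection graph $\mathcal L_2(H)$ is the simple graph with vertex set $E$ in which distinct $e,e'$ are adjacent iff $|e\cap e'|=2$. *)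

theory Defs
  imports Main
begin

text \<open>Parallel edges are allowed since edges are abstract elements.\<close>
definition hypergraph :: "'v set \<Rightarrow> 'e set \<Rightarrow> ('e \<Rightarrow> 'v set) \<Rightarrow> bool" where
  "hypergraph V E inc \<longleftrightarrow> finite V \<and> V \<noteq> {} \<and> finite E \<and> (\<forall>e\<in>E. inc e \<subseteq> V)"

definition uniform3 :: "'e set \<Rightarrow> ('e \<Rightarrow> 'v set) \<Rightarrow> bool" where
  "uniform3 E inc \<longleftrightarrow> (\<forall>e\<in>E. card (inc e) = 3)"

definition hdegree :: "'e set \<Rightarrow> ('e \<Rightarrow> 'v set) \<Rightarrow> 'v \<Rightarrow> nat" where
  "hdegree E inc v = card {e\<in>E. v \<in> inc e}"

text \<open>A walk v_0 e_1 v_1 ... e_k v_k is given by the vertex list vs = [v_0,...,v_k]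
  and the edge list es = [e_1,...,e_k].\<close>
definition is_walk :: "'v set \<Rightarrow> 'e set \<Rightarrow> ('e \<Rightarrow> 'v set) \<Rightarrow> 'v list \<Rightarrow> 'e list \<Rightarrow> bool" where
  "is_walk V E inc vs es \<longleftrightarrow> length vs = Suc (length es) \<and> set vs \<subseteq> V \<and> set es \<subseteq> E \<and>
     (\<forall>i < length es. vs ! i \<noteq> vs ! Suc i \<and> vs ! i \<in> inc (es ! i) \<and> vs ! Suc i \<in> inc (es ! i))"

definition is_closed_walk :: "'v set \<Rightarrow> 'e set \<Rightarrow> ('e \<Rightarrow> 'v set) \<Rightarrow> 'v list \<Rightarrow> 'e list \<Rightarrow> bool" where
  "is_closed_walk V E inc vs es \<longleftrightarrow> is_walk V E inc vs es \<and> length es \<ge> 2 \<and> hd vs = last vs"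

definition is_strict_trail :: "'v set \<Rightarrow> 'e set \<Rightarrow> ('e \<Rightarrow> 'v set) \<Rightarrow> 'v list \<Rightarrow> 'e list \<Rightarrow> bool" where
  "is_strict_trail V E inc vs es \<longleftrightarrow> is_walk V E inc vs es \<and> distinct es"

definition is_euler_tour :: "'v set \<Rightarrow> 'e set \<Rightarrow> ('e \<Rightarrow> 'v set) \<Rightarrow> 'v list \<Rightarrow> 'e list \<Rightarrow> bool" where
  "is_euler_tour V E inc vs es \<longleftrightarrow> is_closed_walk V E inc vs es \<and> is_strict_trail V E inc vs es
     \<and> set es = E"

definition eulerian :: "'v set \<Rightarrow> 'e set \<Rightarrow> ('e \<Rightarrow> 'v set) \<Rightarrow> bool" where
  "eulerian V E inc \<longleftrightarrow> (\<exists>vs es. is_euler_tour V E inc vs es)"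

definition L2_adj :: "'e set \<Rightarrow> ('e \<Rightarrow> 'v set) \<Rightarrow> 'e \<Rightarrow> 'e \<Rightarrow> bool" where
  "L2_adj E inc e e' \<longleftrightarrow> e \<in> E \<and> e' \<in> E \<and> e \<noteq> e' \<and> card (inc e \<inter> inc e') = 2"

definition L2_connected :: "'e set \<Rightarrow> ('e \<Rightarrow> 'v set) \<Rightarrow> bool" where
  "L2_connected E inc \<longleftrightarrow> E \<noteq> {} \<and>
     (\<forall>e\<in>E. \<forall>e'\<in>E. (e, e') \<in> {(a, b). L2_adj E inc a b}\<^sup>*)"

end

theory Submission
  imports Defs
begin


fun ptrail :: "('e \<Rightarrow> 'v set) \<Rightarrow> 'v list \<Rightarrow> 'e list \<Rightarrow> bool" where
  "ptrail p [v] [] = True"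
| "ptrail p (v # w # vs) (e # es) = (v \<noteq> w \<and> p e = {v, w} \<and> ptrail p (w # vs) es)"
| "ptrail p _ _ = False"

lemma ptrail_len: "ptrail p vs es \<Longrightarrow> length vs = Suc (length es)"
  by (induct p vs es rule: ptrail.induct) auto

lemma ptrail_ne: "ptrail p vs es \<Longrightarrow> vs \<noteq> []"
  by (cases vs) auto

lemma ptrail_nth: "ptrail p vs es \<Longrightarrow> i < length es \<Longrightarrow> vs!i \<noteq> vs!Suc i \<and> p (es!i) = {vs!i, vs!Suc i}"
proof (induct p vs es arbitrary: i rule: ptrail.induct)
  case (2 p v w vs e es)
  then show ?case by (cases i) auto
qed auto

lemma ptrail_append: "ptrail p vs1 es1 \<Longrightarrow> ptrail p vs2 es2 \<Longrightarrow> last vs1 = hd vs2 \<Longrightarrow> ptrail p (vs1 @ tl vs2) (es1 @ es2)"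
proof (induct p vs1 es1 rule: ptrail.induct)
  case (1 p v)
  then show ?case by (cases vs2) auto
next
  case (2 p v w vs e es)
  then show ?case by auto
qed auto

lemma ptrail_take_drop: "ptrail p vs es \<Longrightarrow> i \<le> length es \<Longrightarrow> ptrail p (take (Suc i) vs) (take i es) \<and> ptrail p (drop i vs) (drop i es)"
proof (induct p vs es arbitrary: i rule: ptrail.induct)
  case (2 p v w vs e es)
  show ?case
  proof (cases i)
    case 0 then show ?thesis using 2 by auto
  next
    case (Suc j)
    then have "ptrail p (take (Suc j) (w#vs)) (take j es) \<and> ptrail p (drop j (w#vs)) (drop j es)"
      using 2 by auto
    then show ?thesis using 2 Suc by (cases vs) auto
  qed
qed auto

lemma ptrail_rev: "ptrail p vs es \<Longrightarrow> ptrail p (rev vs) (rev es)"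
proof (induct p vs es rule: ptrail.induct)
  case (2 p v w vs e es)
  have a: "ptrail p [w, v] [e]" using 2 by (auto simp: insert_commute)
  have r: "ptrail p (rev (w#vs)) (rev es)" using 2 by simp
  have "last (rev (w#vs)) = hd [w, v]" by simp
  from ptrail_append[OF r a this] show ?case by simp
qed auto

lemma ptrail_cong: "(\<forall>e\<in>set es. p e = p' e) \<Longrightarrow> ptrail p vs es = ptrail p' vs es"
proof (induct p vs es rule: ptrail.induct)
  case (2 p v w vs e es)
  then show ?case by simp
qed simp_all

lemma ptrail_edge_sub: "ptrail p vs es \<Longrightarrow> e \<in> set es \<Longrightarrow> p e \<subseteq> set vs"
proof (induct p vs es rule: ptrail.induct)
  case (2 p v w vs e' es)
  show ?case
  proof (cases "e = e'")
    case True then show ?thesis using 2 by simp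
  next
    case False then have "p e \<subseteq> set (w # vs)" using 2 by simp
    then show ?thesis by auto
  qed
qed simp_all

lemma ptrail_verts: "ptrail p vs es \<Longrightarrow> es \<noteq> [] \<Longrightarrow> set vs \<subseteq> \<Union>(p ` set es)"
proof (induct p vs es rule: ptrail.induct)
  case (2 p v w vs e es)
  show ?case
  proof (cases "es = []")
    case True then have "vs = []" using 2 ptrail_len[of p "w#vs" es] by simp
    then show ?thesis using 2 True by simp
  next
    case False then have "set (w#vs) \<subseteq> \<Union>(p ` set es)" using 2 by simp
    then show ?thesis using 2 by auto
  qed
qed simp_all

lemma card_filter_insert:
  assumes "finite A" "e \<notin> A"
  shows "card {x \<in> insert e A. P x} = (if P e then Suc (card {x\<in>A. P x}) else card {x\<in>A. P x})"
proof -
  have "{x \<in> insert e A. P x} = (if P e then insert e {x\<in>A. P x} else {x\<in>A. P x})" by auto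
  then show ?thesis using assms by auto
qed

lemma ptrail_parity: "ptrail p vs es \<Longrightarrow> distinct es \<Longrightarrow>
   odd (card {e \<in> set es. z \<in> p e}) \<longleftrightarrow> ((hd vs = z) \<noteq> (last vs = z))"
proof (induct p vs es rule: ptrail.induct)
  case (2 p v w vs e es)
  define c where "c = card {x\<in>set es. z \<in> p x}"
  then have IH: "odd c \<longleftrightarrow> ((w = z) \<noteq> (last (w#vs) = z))" using 2 by auto
  have C: "card {x \<in> set (e#es). z \<in> p x} = (if z \<in> p e then Suc c else c)"
    unfolding c_def using 2 card_filter_insert[of "set es" e "\<lambda>x. z \<in> p x"] by simp
  have G: "odd (card {x \<in> set (e#es). z \<in> p x}) = (if z \<in> p e then \<not> odd c else odd c)"
    unfolding C by simp
  have L: "last (v#w#vs) = last (w#vs)" by simp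
  show ?case unfolding G L using IH 2(2) by auto
qed auto

lemma ptrail_closed_len:
  assumes "ptrail p vs es" "es \<noteq> []" "hd vs = last vs" shows "2 \<le> length es"
proof (rule ccontr)
  assume "\<not> 2 \<le> length es"
  moreover have "length es \<noteq> 0" using assms(2) by simp
  ultimately have l: "length es = 1" by arith
  then have lv: "length vs = 2" using ptrail_len[OF assms(1)] by simp
  then obtain a b where ab: "vs = [a, b]"
    by (auto simp: length_Suc_conv numeral_2_eq_2)
  have "vs!0 \<noteq> vs!Suc 0" using ptrail_nth[OF assms(1), of 0] l by auto
  then show False using assms(3) ab by simp
qed

lemma ptrail_rot:
  assumes "ptrail p vs es" "hd vs = last vs" "i < length es"
  shows "ptrail p (drop i vs @ tl (take (Suc i) vs)) (drop i es @ take i es) \<and>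
     hd (drop i vs @ tl (take (Suc i) vs)) = vs ! i \<and>
     last (drop i vs @ tl (take (Suc i) vs)) = vs ! i"
proof -
  have l: "length vs = Suc (length es)" using ptrail_len[OF assms(1)] .
  have A: "ptrail p (take (Suc i) vs) (take i es)" and B: "ptrail p (drop i vs) (drop i es)"
    using ptrail_take_drop[OF assms(1)] assms(3) by auto
  have ne: "vs \<noteq> []" using l by auto
  have "last (drop i vs) = hd (take (Suc i) vs)"
    using assms(2) l assms(3) ne by (simp add: hd_conv_nth last_drop)
  then have P: "ptrail p (drop i vs @ tl (take (Suc i) vs)) (drop i es @ take i es)"
    using ptrail_append[OF B A] by simp
  have H: "hd (drop i vs @ tl (take (Suc i) vs)) = vs ! i"
    using l assms(3) by (simp add: hd_drop_conv_nth)
  have L: "last (drop i vs @ tl (take (Suc i) vs)) = vs ! i"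
  proof (cases i)
    case 0 then show ?thesis using assms(2) ne by (cases vs) (auto simp: hd_conv_nth)
  next
    case (Suc j)
    then have "tl (take (Suc i) vs) \<noteq> []" using l assms(3) by (cases vs) auto
    moreover have "last (take (Suc i) vs) = vs ! i" using l assms(3) by (simp add: take_Suc_conv_app_nth)
    ultimately show ?thesis by (simp add: last_tl)
  qed
  show ?thesis using P H L by auto
qed



definition evenp :: "'e set \<Rightarrow> ('e \<Rightarrow> 'v set) \<Rightarrow> bool" where
  "evenp F p \<longleftrightarrow> (\<forall>v. even (card {e\<in>F. v \<in> p e}))"

lemma closed_through:
  assumes fin: "finite F" and ev: "evenp F p" and c2: "\<forall>e\<in>F. card (p e) = 2" and f: "f \<in> F"
  shows "\<exists>vs es. ptrail p vs es \<and> distinct es \<and> set es \<subseteq> F \<and> f \<in> set es \<and> hd vs = last vs"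
proof -
  obtain a b where ab: "p f = {a, b}" "a \<noteq> b" using c2 f by (meson card_2_iff)
  define P where "P n \<longleftrightarrow> (\<exists>vs es. ptrail p vs es \<and> distinct es \<and> set es \<subseteq> F \<and> es \<noteq> [] \<and> hd es = f \<and> length es = n)" for n
  have P1: "P 1" unfolding P_def using ab f by (intro exI[of _ "[a,b]"] exI[of _ "[f]"]) auto
  have bnd: "\<forall>y. P y \<longrightarrow> y \<le> card F"
  proof (intro allI impI)
    fix y assume "P y"
    then obtain vs es where "distinct es" "set es \<subseteq> F" "length es = y" unfolding P_def by blast
    then show "y \<le> card F" using fin by (metis card_mono distinct_card)
  qed
  obtain n where n: "P n" "\<forall>y. P y \<longrightarrow> y \<le> n" using Nat.ex_has_greatest_nat[OF P1 bnd] by blast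
  then obtain vs es where T: "ptrail p vs es" "distinct es" "set es \<subseteq> F" "es \<noteq> []" "hd es = f" "length es = n"
    unfolding P_def by blast
  have "hd vs = last vs"
  proof (rule ccontr)
    assume ne: "hd vs \<noteq> last vs"
    define z where "z = last vs"
    have odd: "odd (card {e \<in> set es. z \<in> p e})" using ptrail_parity[OF T(1) T(2), of z] ne z_def by simp
    have evF: "even (card {e \<in> F. z \<in> p e})" using ev unfolding evenp_def by blast
    have sub: "{e \<in> set es. z \<in> p e} \<subseteq> {e \<in> F. z \<in> p e}" using T(3) by auto
    have "{e \<in> set es. z \<in> p e} \<noteq> {e \<in> F. z \<in> p e}" using odd evF by metis
    then obtain e where e: "e \<in> F" "e \<notin> set es" "z \<in> p e" using sub by blast
    obtain w where w: "p e = {z, w}" "z \<noteq> w"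
    proof -
      obtain x y where "p e = {x,y}" "x \<noteq> y" using c2 e(1) by (meson card_2_iff)
      then show ?thesis using that e(3) by (auto simp: insert_commute)
    qed
    have t2: "ptrail p [z, w] [e]" using w by simp
    have "ptrail p (vs @ tl [z, w]) (es @ [e])" using ptrail_append[OF T(1) t2] z_def by simp
    then have "P (Suc n)" unfolding P_def using T e by (intro exI[of _ "vs @ [w]"] exI[of _ "es @ [e]"]) auto
    then show False using n(2) by fastforce
  qed
  moreover have "f \<in> set es" using T(4) T(5) by (cases es) auto
  ultimately show ?thesis using T by blast
qed

lemma rot0:
  assumes "ptrail p vs es" "hd vs = last vs" "i < length es"
  shows "\<exists>vs' rv. ptrail p vs' (rotate i es) \<and> hd vs' = last vs' \<and> vs' = vs!i # vs!Suc i # rv"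
proof -
  have l: "length vs = Suc (length es)" using ptrail_len[OF assms(1)] .
  have R: "ptrail p (drop i vs @ tl (take (Suc i) vs)) (drop i es @ take i es) \<and>
     hd (drop i vs @ tl (take (Suc i) vs)) = vs ! i \<and>
     last (drop i vs @ tl (take (Suc i) vs)) = vs ! i" using ptrail_rot[OF assms] .
  have rot: "rotate i es = drop i es @ take i es" using assms(3) by (simp add: rotate_drop_take)
  have d: "drop i vs = vs!i # vs!Suc i # drop (Suc (Suc i)) vs"
    using l assms(3) by (simp add: Cons_nth_drop_Suc)
  show ?thesis using R rot d
    by (intro exI[of _ "drop i vs @ tl (take (Suc i) vs)"] exI[of _ "drop (Suc (Suc i)) vs @ tl (take (Suc i) vs)"]) auto
qed

lemma rot_edge:
  assumes T: "ptrail p vs es" "hd vs = last vs" "distinct es" "g \<in> set es" and pg: "p g = {x, b}"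
  shows "\<exists>vs' es' rv re. ptrail p vs' es' \<and> hd vs' = last vs' \<and> distinct es' \<and> set es' = set es \<and>
      length es' = length es \<and> vs' = x # b # rv \<and> es' = g # re"
proof -
  obtain i where i: "i < length es" "es ! i = g" using T(4) by (meson in_set_conv_nth)
  have l: "length vs = Suc (length es)" using ptrail_len[OF T(1)] .
  have nt: "vs!i \<noteq> vs!Suc i \<and> p g = {vs!i, vs!Suc i}" using ptrail_nth[OF T(1) i(1)] i(2) by simp
  have dd: "drop i es = es!i # drop (Suc i) es" using i(1) by (simp add: Cons_nth_drop_Suc)
  have rg: "rotate i es = g # drop (Suc i) es @ take i es"
    using i dd by (simp add: rotate_drop_take)
  show ?thesis
  proof (cases "vs!i = x")
    case True
    then have "vs!Suc i = b" using nt pg by (auto simp: doubleton_eq_iff)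
    then obtain vs' rv where "ptrail p vs' (rotate i es)" "hd vs' = last vs'" "vs' = x # b # rv"
      using rot0[OF T(1) T(2) i(1)] True by blast
    moreover have "distinct (rotate i es)" "set (rotate i es) = set es" "length (rotate i es) = length es"
      using T(3) by simp_all
    ultimately show ?thesis using rg by blast
  next
    case False
    then have xb: "vs!i = b" "vs!Suc i = x" using nt pg by (auto simp: doubleton_eq_iff)
    define j where "j = length es - 1 - i"
    have j: "j < length (rev es)" using i unfolding j_def by simp
    have rT: "ptrail p (rev vs) (rev es)" using ptrail_rev[OF T(1)] .
    have rc: "hd (rev vs) = last (rev vs)" using T(2) l by (simp add: hd_rev last_rev)
    have e1: "(rev vs)!j = x" using xb l i unfolding j_def by (simp add: rev_nth)
    have e2: "(rev vs)!Suc j = b" using xb l i unfolding j_def by (simp add: rev_nth Suc_diff_Suc)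
    have e3: "(rev es)!j = g" using i unfolding j_def by (simp add: rev_nth)
    have dd2: "drop j (rev es) = (rev es)!j # drop (Suc j) (rev es)" using j by (simp add: Cons_nth_drop_Suc)
    have rg2: "rotate j (rev es) = g # drop (Suc j) (rev es) @ take j (rev es)"
      using j e3 dd2 by (simp add: rotate_drop_take)
    obtain vs' rv where "ptrail p vs' (rotate j (rev es))" "hd vs' = last vs'" "vs' = x # b # rv"
      using rot0[OF rT rc j] e1 e2 by auto
    moreover have "distinct (rotate j (rev es))" "set (rotate j (rev es)) = set es" "length (rotate j (rev es)) = length es"
      using T(3) by simp_all
    ultimately show ?thesis using rg2 by blast
  qed
qed

lemma rot_vertex:
  assumes T: "ptrail p vs es" "hd vs = last vs" "es \<noteq> []" "w \<in> set vs"
  shows "\<exists>vs' k. ptrail p vs' (rotate k es) \<and> hd vs' = w \<and> last vs' = w"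
proof -
  have l: "length vs = Suc (length es)" using ptrail_len[OF T(1)] .
  obtain i where i: "i < length vs" "vs!i = w" using T(4) by (meson in_set_conv_nth)
  obtain i' where i': "i' < length es" "vs!i' = w"
  proof (cases "i < length es")
    case True then show ?thesis using that i by blast
  next
    case False
    then have "i = length es" using i l by simp
    have ne: "vs \<noteq> []" using l by auto
    have "last vs = vs ! (length vs - 1)" using ne by (rule last_conv_nth)
    then have "last vs = w" using i l \<open>i = length es\<close> by simp
    moreover have "hd vs = vs!0" using ne by (simp add: hd_conv_nth)
    ultimately have "vs!0 = w" using T(2) by simp
    then show ?thesis using that T(3) by blast
  qed
  obtain vs' rv where "ptrail p vs' (rotate i' es)" "hd vs' = last vs'" "vs' = vs!i' # vs!Suc i' # rv"
    using rot0[OF T(1) T(2) i'(1)] by blast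
  then show ?thesis using i' by auto
qed



definition VS :: "('e \<Rightarrow> 'v set) \<Rightarrow> 'e set \<Rightarrow> 'v set" where "VS inc S = \<Union>(inc ` S)"
definition cnt :: "('e \<Rightarrow> 'v) \<Rightarrow> 'e set \<Rightarrow> 'v \<Rightarrow> nat" where "cnt u S v = card {e\<in>S. u e = v}"
definition okU :: "('e \<Rightarrow> 'v set) \<Rightarrow> 'e set \<Rightarrow> ('e \<Rightarrow> 'v) \<Rightarrow> 'v set \<Rightarrow> bool" where
  "okU inc S u T \<longleftrightarrow> (\<forall>e\<in>S. u e \<in> inc e) \<and> (\<forall>v\<in>VS inc S. odd (cnt u S v) \<longleftrightarrow> v \<in> T)"

lemma VS_insert: "VS inc (insert e S) = inc e \<union> VS inc S" unfolding VS_def by auto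

lemma card_T_T':
  assumes finT: "finite T" and T: "T \<subseteq> B \<union> A" and h: "h \<in> B"
    and new: "\<forall>v \<in> B - A. (v \<in> T \<longleftrightarrow> v = h)"
  shows "card T = Suc (card {v \<in> A. (v\<in>T) \<noteq> (v = h)}) \<or> card {v \<in> A. (v\<in>T) \<noteq> (v = h)} = Suc (card T)"
proof (cases "h \<in> A")
  case True
  have TA: "T \<subseteq> A"
  proof
    fix v assume v: "v \<in> T"
    show "v \<in> A"
    proof (rule ccontr)
      assume "v \<notin> A"
      then have "v \<in> B - A" using v T by blast
      then have "v = h" using new v by blast
      then show False using True \<open>v \<notin> A\<close> by simp
    qed
  qed
  show ?thesis
  proof (cases "h \<in> T")
    case True
    have eq: "{v \<in> A. (v\<in>T) \<noteq> (v = h)} = T - {h}" using TA True by auto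
    have "Suc (card (T - {h})) = card T" using card_Suc_Diff1[OF finT True] .
    then show ?thesis unfolding eq by simp
  next
    case False
    then have "{v \<in> A. (v\<in>T) \<noteq> (v = h)} = insert h T" using TA \<open>h \<in> A\<close> by auto
    then show ?thesis using False finT by simp
  qed
next
  case False
  then have hT: "h \<in> T" using new h by blast
  have eq: "T = insert h {v \<in> A. (v\<in>T) \<noteq> (v = h)}"
  proof
    show "T \<subseteq> insert h {v \<in> A. (v\<in>T) \<noteq> (v = h)}"
    proof
      fix v assume v: "v \<in> T"
      show "v \<in> insert h {v \<in> A. (v\<in>T) \<noteq> (v = h)}"
      proof (cases "v \<in> A")
        case True then have "v \<noteq> h" using False by blast
        then show ?thesis using True v by simp
      next
        case f2: False
        then have "v \<in> B - A" using v T by blast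
        then have "v = h" using new v by blast
        then show ?thesis by simp
      qed
    qed
  next
    show "insert h {v \<in> A. (v\<in>T) \<noteq> (v = h)} \<subseteq> T" using hT False by auto
  qed
  have "finite {v \<in> A. (v\<in>T) \<noteq> (v = h)}" using finT eq by (metis finite_insert)
  moreover have "h \<notin> {v \<in> A. (v\<in>T) \<noteq> (v = h)}" using False by simp
  ultimately show ?thesis using eq by (metis card_insert_disjoint)
qed

lemma core:
  assumes fin: "finite S" "finite (VS inc S)" "finite (inc e)" and eS: "e \<notin> S"
    and IH: "\<forall>T'. T' \<subseteq> VS inc S \<longrightarrow> even (card T' + card S) \<longrightarrow> Q T' \<longrightarrow> (\<exists>u. okU inc S u T')"
    and T: "T \<subseteq> VS inc (insert e S)" "even (card T + card (insert e S))"
    and h: "h \<in> inc e"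
    and new: "\<forall>v \<in> inc e - VS inc S. (v \<in> T \<longleftrightarrow> v = h)"
    and Q: "Q {v \<in> VS inc S. (v\<in>T) \<noteq> (v = h)}"
  shows "\<exists>u. okU inc (insert e S) u T"
proof -
  define T' where "T' = {v \<in> VS inc S. (v\<in>T) \<noteq> (v = h)}"
  have T'sub: "T' \<subseteq> VS inc S" unfolding T'_def by auto
  have T1: "T \<subseteq> inc e \<union> VS inc S" using T(1) by (simp add: VS_insert)
  have finT: "finite T" using T1 fin by (meson finite_Un finite_subset)
  have cc: "card T = Suc (card T') \<or> card T' = Suc (card T)"
    using card_T_T'[OF finT T1 h new] unfolding T'_def .
  have "even (card T' + card S)" using cc T(2) eS fin(1) by auto
  then obtain u where u: "okU inc S u T'" using IH T'sub Q unfolding T'_def by blast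
  define u' where "u' = u(e := h)"
  have cnt': "cnt u' (insert e S) v = (if h = v then Suc (cnt u S v) else cnt u S v)" for v
  proof -
    have a: "{x \<in> insert e S. u' x = v} = (if h = v then insert e {x\<in>S. u x = v} else {x\<in>S. u x = v})"
      unfolding u'_def using eS by auto
    have "e \<notin> {x\<in>S. u x = v}" using eS by simp
    then show ?thesis unfolding cnt_def a using fin(1) by simp
  qed
  have "okU inc (insert e S) u' T"
    unfolding okU_def
  proof (intro conjI ballI)
    fix x assume "x \<in> insert e S"
    then show "u' x \<in> inc x" using u h unfolding u'_def okU_def by auto
  next
    fix v assume v: "v \<in> VS inc (insert e S)"
    show "odd (cnt u' (insert e S) v) \<longleftrightarrow> v \<in> T"
    proof (cases "v \<in> VS inc S")
      case True
      then have "odd (cnt u S v) \<longleftrightarrow> v \<in> T'" using u unfolding okU_def by blast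
      then show ?thesis using True unfolding cnt' T'_def by auto
    next
      case False
      have "{x\<in>S. u x = v} = {}"
      proof -
        { fix x assume "x \<in> S" "u x = v"
          then have "v \<in> VS inc S" using u unfolding okU_def VS_def by force
          then have False using False by simp }
        then show ?thesis by auto
      qed
      then have c0: "cnt u S v = 0" unfolding cnt_def by (metis card.empty)
      have "v \<in> inc e - VS inc S" using v False by (simp add: VS_insert)
      then show ?thesis using new c0 unfolding cnt' by auto
    qed
  qed
  then show ?thesis by blast
qed



definition Good where "Good inc S \<longleftrightarrow> (\<forall>T. T \<subseteq> VS inc S \<longrightarrow> even (card T + card S) \<longrightarrow> (\<exists>u. okU inc S u T))"
definition Almost where "Almost inc S z \<longleftrightarrow> (\<forall>T. T \<subseteq> VS inc S \<longrightarrow> even (card T + card S) \<longrightarrow> z \<notin> T \<longrightarrow> (\<exists>u. okU inc S u T))"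
definition state where "state E inc S \<longleftrightarrow> Good inc S \<or> (\<exists>z \<in> VS inc S. Almost inc S z \<and> (\<exists>e'\<in>E-S. z \<in> inc e'))"

lemma card3_two_out:
  assumes "card B = 3" "a \<in> B" "b \<in> B" "a \<noteq> b" "2 \<le> card (B \<inter> A)" "a \<notin> A" "b \<notin> A"
  shows False
proof -
  have fin: "finite B" using assms(1) by (metis card.infinite zero_neq_numeral)
  have "B \<inter> A \<subseteq> B - {a, b}" using assms by auto
  moreover have "card (B - {a,b}) = 1" using assms fin by (simp add: card_Diff_subset)
  ultimately have "card (B \<inter> A) \<le> 1" using fin by (metis card_mono finite_Diff)
  then show False using assms(5) by simp
qed

lemma step:
  assumes finE: "finite E" and SE: "S \<subseteq> E" and c3: "\<forall>e\<in>E. card (inc e) = 3"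
    and deg2: "\<forall>e\<in>E. \<forall>v\<in>inc e. \<exists>e'\<in>E. e' \<noteq> e \<and> v \<in> inc e'"
    and e: "e \<in> E" "e \<notin> S" and two: "2 \<le> card (inc e \<inter> VS inc S)"
    and st: "state E inc S"
  shows "state E inc (insert e S)"
proof -
  have finS: "finite S" using finE SE by (rule finite_subset[rotated])
  have fininc: "\<forall>x\<in>E. finite (inc x)" using c3 by (metis card.infinite zero_neq_numeral)
  have finVS: "finite (VS inc S)" unfolding VS_def using finS fininc SE by blast
  have fine: "finite (inc e)" using fininc e by blast
  have c3e: "card (inc e) = 3" using c3 e by blast
  note core' = core[OF finS finVS fine e(2)]
  have goodIH: "\<forall>T'. T' \<subseteq> VS inc S \<longrightarrow> even (card T' + card S) \<longrightarrow> (\<lambda>_. True) T' \<longrightarrow> (\<exists>u. okU inc S u T')"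
    if "Good inc S" using that unfolding Good_def by simp
  have almIH: "\<forall>T'. T' \<subseteq> VS inc S \<longrightarrow> even (card T' + card S) \<longrightarrow> (\<lambda>T'. z \<notin> T') T' \<longrightarrow> (\<exists>u. okU inc S u T')"
    if "Almost inc S z" for z using that unfolding Almost_def by simp
  show ?thesis
  proof (cases "inc e \<subseteq> VS inc S")
    case True
    have nw: "\<forall>v \<in> inc e - VS inc S. (v \<in> T \<longleftrightarrow> v = h)" for T h using True by blast
    have VSeq: "VS inc (insert e S) = VS inc S" using True by (auto simp: VS_insert)
    obtain x where x: "x \<in> inc e" using c3e by (metis card.empty ex_in_conv zero_neq_numeral)
    show ?thesis using st[unfolded state_def]
    proof (elim disjE bexE conjE)
      assume G: "Good inc S"
      have "Good inc (insert e S)" unfolding Good_def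
      proof (intro allI impI)
        fix T assume T: "T \<subseteq> VS inc (insert e S)" "even (card T + card (insert e S))"
        show "\<exists>u. okU inc (insert e S) u T" using core'[OF goodIH[OF G] T(1) T(2) x nw] by simp
      qed
      then show ?thesis unfolding state_def by blast
    next
      fix z e' assume zV: "z \<in> VS inc S" and A: "Almost inc S z" and e': "e' \<in> E - S" "z \<in> inc e'"
      show ?thesis
      proof (cases "z \<in> inc e")
        case False
        have "Almost inc (insert e S) z" unfolding Almost_def
        proof (intro allI impI)
          fix T assume T: "T \<subseteq> VS inc (insert e S)" "even (card T + card (insert e S))" "z \<notin> T"
          have "z \<notin> {v \<in> VS inc S. (v\<in>T) \<noteq> (v = x)}" using T(3) False x by auto
          then show "\<exists>u. okU inc (insert e S) u T" using core'[OF almIH[OF A] T(1) T(2) x nw] by simp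
        qed
        moreover have "e' \<in> E - insert e S" using e' False by auto
        ultimately show ?thesis unfolding state_def using zV VSeq e' by blast
      next
        case True
        have "Good inc (insert e S)" unfolding Good_def
        proof (intro allI impI)
          fix T assume T: "T \<subseteq> VS inc (insert e S)" "even (card T + card (insert e S))"
          obtain w where w: "w \<in> inc e" "w \<noteq> z"
          proof -
            have "inc e - {z} \<noteq> {}" using c3e fine True
              by (metis One_nat_def card.empty card_Diff_singleton diff_Suc_1 numeral_3_eq_3 zero_neq_numeral Zero_not_Suc)
            then show ?thesis using that by blast
          qed
          define h where "h = (if z \<in> T then z else w)"
          have h: "h \<in> inc e" unfolding h_def using True w by auto
          have "z \<notin> {v \<in> VS inc S. (v\<in>T) \<noteq> (v = h)}" unfolding h_def using w by auto
          then show "\<exists>u. okU inc (insert e S) u T" using core'[OF almIH[OF A] T(1) T(2) h nw] by simp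
        qed
        then show ?thesis unfolding state_def by blast
      qed
    qed
  next
    case False
    then obtain a where a: "a \<in> inc e" "a \<notin> VS inc S" by blast
    have others: "\<forall>b\<in>inc e. b \<noteq> a \<longrightarrow> b \<in> VS inc S"
      using card3_two_out[OF c3e a(1) _ _ two a(2)] by blast
    have nw: "\<forall>v \<in> inc e - VS inc S. (v \<in> T \<longleftrightarrow> v = h)" if "a \<in> T \<longleftrightarrow> a = h" for T h
  proof
    fix v assume "v \<in> inc e - VS inc S"
    then have "v = a" using others by blast
    then show "(v \<in> T) = (v = h)" using that by simp
  qed
    have c2: "card (inc e - {a}) = 2" using c3e a(1) fine by simp
    obtain x where x: "x \<in> inc e" "x \<noteq> a"
      using c2 by (metis Diff_iff card.empty ex_in_conv insertCI zero_neq_numeral)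
    show ?thesis using st[unfolded state_def]
    proof (elim disjE bexE conjE)
      assume G: "Good inc S"
      have "Good inc (insert e S)" unfolding Good_def
      proof (intro allI impI)
        fix T assume T: "T \<subseteq> VS inc (insert e S)" "even (card T + card (insert e S))"
        define h where "h = (if a \<in> T then a else x)"
        have h: "h \<in> inc e" unfolding h_def using a x by auto
        have "a \<in> T \<longleftrightarrow> a = h" unfolding h_def using x by auto
        then show "\<exists>u. okU inc (insert e S) u T" using core'[OF goodIH[OF G] T(1) T(2) h nw] by simp
      qed
      then show ?thesis unfolding state_def by blast
    next
      fix z e' assume zV: "z \<in> VS inc S" and A: "Almost inc S z" and e': "e' \<in> E - S" "z \<in> inc e'"
      show ?thesis
      proof (cases "z \<in> inc e")
        case False
        have "Almost inc (insert e S) z" unfolding Almost_def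
        proof (intro allI impI)
          fix T assume T: "T \<subseteq> VS inc (insert e S)" "even (card T + card (insert e S))" "z \<notin> T"
          define h where "h = (if a \<in> T then a else x)"
          have h: "h \<in> inc e" unfolding h_def using a x by auto
          have "a \<in> T \<longleftrightarrow> a = h" unfolding h_def using x by auto
          moreover have "z \<notin> {v \<in> VS inc S. (v\<in>T) \<noteq> (v = h)}" using T(3) False h by auto
          ultimately show "\<exists>u. okU inc (insert e S) u T" using core'[OF almIH[OF A] T(1) T(2) h nw] by simp
        qed
        moreover have "e' \<in> E - insert e S" using e' False by auto
        moreover have "z \<in> VS inc (insert e S)" using zV by (simp add: VS_insert)
        ultimately show ?thesis unfolding state_def using e' by blast
      next
        case True
        have za: "z \<noteq> a" using zV a(2) by blast
        obtain w where w: "w \<in> inc e" "w \<noteq> a" "w \<noteq> z"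
        proof -
          have "card (inc e - {a} - {z}) = 1" using c2 True za fine by simp
          then have "inc e - {a} - {z} \<noteq> {}" by force
          then show ?thesis using that by blast
        qed
        have "Almost inc (insert e S) a" unfolding Almost_def
        proof (intro allI impI)
          fix T assume T: "T \<subseteq> VS inc (insert e S)" "even (card T + card (insert e S))" "a \<notin> T"
          define h where "h = (if z \<in> T then z else w)"
          have h: "h \<in> inc e" unfolding h_def using True w by auto
          have "a \<in> T \<longleftrightarrow> a = h" unfolding h_def using T(3) w za by auto
          moreover have "z \<notin> {v \<in> VS inc S. (v\<in>T) \<noteq> (v = h)}" unfolding h_def using w by auto
          ultimately show "\<exists>u. okU inc (insert e S) u T" using core'[OF almIH[OF A] T(1) T(2) h nw] by simp
        qed
        moreover obtain e2 where e2: "e2 \<in> E" "e2 \<noteq> e" "a \<in> inc e2" using deg2 e(1) a(1) by blast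
        moreover have "e2 \<notin> S" using e2 a(2) unfolding VS_def by blast
        moreover have "a \<in> VS inc (insert e S)" using a by (simp add: VS_insert)
        ultimately show ?thesis unfolding state_def by blast
      qed
    qed
  qed
qed



lemma init_state:
  assumes c3: "\<forall>e\<in>E. card (inc e) = 3"
    and deg2: "\<forall>e\<in>E. \<forall>v\<in>inc e. \<exists>e'\<in>E. e' \<noteq> e \<and> v \<in> inc e'"
    and e1: "e1 \<in> E"
  shows "state E inc {e1}"
proof -
  have c: "card (inc e1) = 3" using c3 e1 by blast
  have fin: "finite (inc e1)" using c by (metis card.infinite zero_neq_numeral)
  obtain z where z: "z \<in> inc e1" using c by (metis card.empty ex_in_conv zero_neq_numeral)
  have IH0: "\<forall>T'. T' \<subseteq> VS inc {} \<longrightarrow> even (card T' + card ({}::'a set)) \<longrightarrow> (\<lambda>_. True) T' \<longrightarrow> (\<exists>u. okU inc {} u T')"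
    unfolding okU_def VS_def by simp
  have VS1: "VS inc {e1} = inc e1" unfolding VS_def by simp
  have "Almost inc {e1} z" unfolding Almost_def
  proof (intro allI impI)
    fix T assume T: "T \<subseteq> VS inc {e1}" "even (card T + card {e1})" "z \<notin> T"
    have sub: "T \<subseteq> inc e1 - {z}" using T VS1 by auto
    have "card (inc e1 - {z}) = 2" using c z fin by simp
    then have "card T \<le> 2" using sub fin by (metis card_mono finite_Diff)
    moreover have "odd (card T)" using T(2) by simp
    ultimately have "card T = 1" by presburger
    then obtain h where h: "T = {h}" by (meson card_1_singletonE)
    have hin: "h \<in> inc e1" using sub h by auto
    have nw: "\<forall>v \<in> inc e1 - VS inc {}. (v \<in> T \<longleftrightarrow> v = h)" using h by auto
    have "\<exists>u. okU inc (insert e1 {}) u T"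
      using core[OF finite.emptyI _ fin _ IH0 _ _ hin nw] T(1) T(2) by (simp add: VS_def)
    then show "\<exists>u. okU inc {e1} u T" by simp
  qed
  moreover obtain e' where "e' \<in> E" "e' \<noteq> e1" "z \<in> inc e'" using deg2 e1 z by blast
  ultimately show ?thesis unfolding state_def using z VS1 by blast
qed

lemma cross: "(x, y) \<in> R\<^sup>* \<Longrightarrow> x \<in> S \<Longrightarrow> y \<notin> S \<Longrightarrow> \<exists>a b. (a,b) \<in> R \<and> a \<in> S \<and> b \<notin> S"
  by (induct rule: rtrancl_induct) auto

lemma grow:
  assumes finE: "finite E" and ne: "E \<noteq> {}" and c3: "\<forall>e\<in>E. card (inc e) = 3"
    and deg2: "\<forall>e\<in>E. \<forall>v\<in>inc e. \<exists>e'\<in>E. e' \<noteq> e \<and> v \<in> inc e'"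
    and con: "L2_connected E inc"
  shows "Good inc E"
proof -
  have fininc: "\<forall>x\<in>E. finite (inc x)" using c3 by (metis card.infinite zero_neq_numeral)
  have main: "1 \<le> k \<Longrightarrow> k \<le> card E \<Longrightarrow> (\<exists>S. S \<subseteq> E \<and> card S = k \<and> state E inc S)" for k
  proof (induct k)
    case 0 then show ?case by simp
  next
    case (Suc k)
    show ?case
    proof (cases "k = 0")
      case True
      obtain e1 where "e1 \<in> E" using ne by blast
      then show ?thesis using init_state[OF c3 deg2] True by (intro exI[of _ "{e1}"]) auto
    next
      case False
      then obtain S where S: "S \<subseteq> E" "card S = k" "state E inc S" using Suc by auto
      have finS: "finite S" using S(1) finE by (rule finite_subset)
      have "S \<noteq> E" using S(2) Suc(3) by auto
      then obtain f0 where f0: "f0 \<in> E" "f0 \<notin> S" using S(1) by blast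
      obtain g0 where g0: "g0 \<in> S" using False S(2) by (metis card.empty ex_in_conv)
      have "(g0, f0) \<in> {(a, b). L2_adj E inc a b}\<^sup>*" using con g0 f0 S(1) unfolding L2_connected_def by blast
      then obtain a b where ab: "L2_adj E inc a b" "a \<in> S" "b \<notin> S"
        using cross[of g0 f0 _ S] g0 f0 by blast
      have bE: "b \<in> E" and c2: "card (inc a \<inter> inc b) = 2" using ab(1) unfolding L2_adj_def by auto
      have "inc b \<inter> inc a \<subseteq> inc b \<inter> VS inc S" using ab(2) unfolding VS_def by auto
      then have "card (inc b \<inter> inc a) \<le> card (inc b \<inter> VS inc S)" using fininc bE by (meson card_mono finite_Int)
      then have two: "2 \<le> card (inc b \<inter> VS inc S)" using c2 by (simp add: Int_commute)
      have "state E inc (insert b S)" using step[OF finE S(1) c3 deg2 bE ab(3) two S(3)] .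
      moreover have "card (insert b S) = Suc k" using finS ab(3) S(2) by simp
      ultimately show ?thesis using S(1) bE by (intro exI[of _ "insert b S"]) auto
    qed
  qed
  have "1 \<le> card E" using ne finE by (simp add: Suc_leI card_gt_0_iff)
  then obtain S where S: "S \<subseteq> E" "card S = card E" "state E inc S" using main by blast
  have "S = E" using S finE by (simp add: card_subset_eq)
  then show ?thesis using S(3) unfolding state_def by blast
qed

lemma parity_sum: "finite A \<Longrightarrow> even (sum f A + card {v\<in>A. odd (f v :: nat)})"
proof (induct rule: finite_induct)
  case empty then show ?case by simp
next
  case (insert x F)
  have "card {v\<in>insert x F. odd (f v)} = (if odd (f x) then Suc (card {v\<in>F. odd (f v)}) else card {v\<in>F. odd (f v)})"
    using card_filter_insert[OF insert(1) insert(2)] .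
  then show ?case using insert by auto
qed

lemma card_as_sum: "finite E \<Longrightarrow> card {e\<in>E. P e} = (\<Sum>e\<in>E. if P e then 1 else 0)"
  by (simp add: sum.If_cases Int_def conj_commute)

lemma double_count:
  assumes finE: "finite E" and c3: "\<forall>e\<in>E. card (inc e) = 3"
  shows "(\<Sum>v\<in>VS inc E. card {e\<in>E. v \<in> inc e}) = 3 * card E"
proof -
  have fininc: "\<forall>x\<in>E. finite (inc x)" using c3 by (metis card.infinite zero_neq_numeral)
  have finV: "finite (VS inc E)" unfolding VS_def using finE fininc by blast
  have "(\<Sum>v\<in>VS inc E. card {e\<in>E. v \<in> inc e}) = (\<Sum>v\<in>VS inc E. \<Sum>e\<in>E. if v \<in> inc e then 1 else 0)"
    using card_as_sum[OF finE] by simp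
  also have "\<dots> = (\<Sum>e\<in>E. \<Sum>v\<in>VS inc E. if v \<in> inc e then 1 else 0)" by (rule sum.swap)
  also have "\<dots> = (\<Sum>e\<in>E. card {v\<in>VS inc E. v \<in> inc e})" using card_as_sum[OF finV] by simp
  also have "\<dots> = (\<Sum>e\<in>E. (3::nat))"
  proof (rule sum.cong)
    fix e assume e: "e \<in> E"
    have "{v\<in>VS inc E. v \<in> inc e} = inc e" using e unfolding VS_def by auto
    then show "card {v\<in>VS inc E. v \<in> inc e} = 3" using c3 e by simp
  qed simp
  finally show ?thesis by simp
qed

lemma even_sel:
  assumes finE: "finite E" and c3: "\<forall>e\<in>E. card (inc e) = 3" and G: "Good inc E"
  shows "\<exists>p. (\<forall>e\<in>E. p e \<subseteq> inc e \<and> card (p e) = 2) \<and> evenp E p"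
proof -
  have fininc: "\<forall>x\<in>E. finite (inc x)" using c3 by (metis card.infinite zero_neq_numeral)
  have finV: "finite (VS inc E)" unfolding VS_def using finE fininc by blast
  define T0 where "T0 = {v \<in> VS inc E. odd (card {e\<in>E. v \<in> inc e})}"
  have "even ((\<Sum>v\<in>VS inc E. card {e\<in>E. v \<in> inc e}) + card T0)"
    unfolding T0_def by (rule parity_sum[OF finV])
  then have "even (3 * card E + card T0)" using double_count[OF finE c3] by simp
  then have "even (card T0 + card E)" by presburger
  moreover have "T0 \<subseteq> VS inc E" unfolding T0_def by auto
  ultimately obtain u where u: "okU inc E u T0" using G unfolding Good_def by blast
  define p where "p e = inc e - {u e}" for e
  have pc: "\<forall>e\<in>E. p e \<subseteq> inc e \<and> card (p e) = 2"
    using u c3 fininc unfolding p_def okU_def by auto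
  have "evenp E p" unfolding evenp_def
  proof
    fix v
    define d where "d = card {e\<in>E. v \<in> inc e}"
    have eq: "{e\<in>E. v \<in> p e} = {e\<in>E. v \<in> inc e} - {e\<in>E. u e = v}" unfolding p_def by auto
    have sub: "{e\<in>E. u e = v} \<subseteq> {e\<in>E. v \<in> inc e}" using u unfolding okU_def by auto
    have cd: "card {e\<in>E. v \<in> p e} = d - cnt u E v"
      unfolding eq d_def cnt_def using sub finE by (simp add: card_Diff_subset)
    have le: "cnt u E v \<le> d" unfolding cnt_def d_def using sub finE by (simp add: card_mono)
    show "even (card {e\<in>E. v \<in> p e})"
    proof (cases "v \<in> VS inc E")
      case True
      then have "odd (cnt u E v) \<longleftrightarrow> odd d" using u unfolding okU_def T0_def d_def by auto
      then show ?thesis unfolding cd using le by auto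
    next
      case False
      then have "{e\<in>E. v \<in> inc e} = {}" unfolding VS_def by auto
      then have "d = 0" unfolding d_def by (metis card.empty)
      then show ?thesis unfolding cd by simp
    qed
  qed
  then show ?thesis using pc by blast
qed



lemma card_split2:
  assumes "finite E" "f \<in> E" "g \<in> E" "f \<noteq> g"
  shows "card {e\<in>E. P e} = card {e\<in>E - {f,g}. P e} + (if P f then 1 else 0) + (if P g then 1 else 0)"
proof -
  have fin: "finite (E - {f,g})" using assms by simp
  have E: "E = insert f (insert g (E - {f,g}))" using assms by auto
  have "card {e\<in>insert f (insert g (E - {f,g})). P e} = card {e\<in>E - {f,g}. P e} + (if P f then 1 else 0) + (if P g then 1 else 0)"
    using card_filter_insert[of "insert g (E - {f,g})" f P] card_filter_insert[OF fin, of g P] assms fin by auto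
  then show ?thesis using E by simp
qed

lemma inter_ne:
  assumes "A \<subseteq> B" "C \<subseteq> B" "finite B" "card B < card A + card C"
  shows "A \<inter> C \<noteq> {}"
proof
  assume d: "A \<inter> C = {}"
  have "card (A \<union> C) = card A + card C" using d assms by (meson card_Un_disjoint finite_subset)
  moreover have "card (A \<union> C) \<le> card B" using assms by (simp add: card_mono)
  ultimately show False using assms(4) by simp
qed

lemma two_elem: "card A = 2 \<Longrightarrow> x \<in> A \<Longrightarrow> \<exists>y. A = {x, y} \<and> x \<noteq> y"
  by (metis card_2_iff doubleton_eq_iff insert_iff singletonD)

definition goodp :: "'e set \<Rightarrow> ('e \<Rightarrow> 'v set) \<Rightarrow> ('e \<Rightarrow> 'v set) \<Rightarrow> bool" where
  "goodp E inc p \<longleftrightarrow> (\<forall>e\<in>E. p e \<subseteq> inc e \<and> card (p e) = 2) \<and> evenp E p"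

lemma even_rest:
  assumes "finite E" "evenp E p" "ptrail p vs es" "distinct es" "set es \<subseteq> E" "hd vs = last vs"
  shows "evenp (E - set es) p"
  unfolding evenp_def
proof
  fix v
  have eq: "{e\<in>E - set es. v \<in> p e} = {e\<in>E. v \<in> p e} - {e\<in>set es. v \<in> p e}" by auto
  have sub: "{e\<in>set es. v \<in> p e} \<subseteq> {e\<in>E. v \<in> p e}" using assms(5) by auto
  have c: "card {e\<in>E - set es. v \<in> p e} = card {e\<in>E. v \<in> p e} - card {e\<in>set es. v \<in> p e}"
    unfolding eq using sub assms(1) by (simp add: card_Diff_subset finite_subset)
  have le: "card {e\<in>set es. v \<in> p e} \<le> card {e\<in>E. v \<in> p e}" using sub assms(1) by (simp add: card_mono)
  have e1: "even (card {e\<in>set es. v \<in> p e})" using ptrail_parity[OF assms(3) assms(4), of v] assms(6) by simp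
  have e2: "even (card {e\<in>E. v \<in> p e})" using assms(2) unfolding evenp_def by blast
  show "even (card {e\<in>E - set es. v \<in> p e})" unfolding c using e1 e2 le by auto
qed

lemma extend:
  assumes finE: "finite E" and c3: "\<forall>e\<in>E. card (inc e) = 3" and con: "L2_connected E inc"
    and gp: "goodp E inc p" and T: "ptrail p vs es" "distinct es" "set es \<subseteq> E" "es \<noteq> []" "hd vs = last vs"
    and ne: "set es \<noteq> E"
  shows "\<exists>p' vs' es'. goodp E inc p' \<and> ptrail p' vs' es' \<and> distinct es' \<and> set es' \<subseteq> E \<and> es' \<noteq> [] \<and>
      hd vs' = last vs' \<and> length es < length es'"
proof -
  define F where "F = E - set es"
  have finF: "finite F" using finE unfolding F_def by simp
  have evF: "evenp F p" unfolding F_def using even_rest[OF finE _ T(1) T(2) T(3) T(5)] gp unfolding goodp_def by blast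
  have c2F: "\<forall>e\<in>F. card (p e) = 2" using gp unfolding goodp_def F_def by blast
  have FE: "F \<subseteq> E" unfolding F_def by auto
  have dis: "set es \<inter> F = {}" unfolding F_def by auto
  show ?thesis
  proof (cases "\<exists>f\<in>F. p f \<inter> set vs \<noteq> {}")
    case True
    then obtain f w where f: "f \<in> F" "w \<in> p f" "w \<in> set vs" by blast
    obtain vsC esC where C: "ptrail p vsC esC" "distinct esC" "set esC \<subseteq> F" "f \<in> set esC" "hd vsC = last vsC"
      using closed_through[OF finF evF c2F f(1)] by blast
    have wC: "w \<in> set vsC" using ptrail_edge_sub[OF C(1) C(4)] f(2) by blast
    have neC: "esC \<noteq> []" using C(4) by auto
    obtain vs1 k1 where R1: "ptrail p vs1 (rotate k1 es)" "hd vs1 = w" "last vs1 = w"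
      using rot_vertex[OF T(1) T(5) T(4) f(3)] by blast
    obtain vs2 k2 where R2: "ptrail p vs2 (rotate k2 esC)" "hd vs2 = w" "last vs2 = w"
      using rot_vertex[OF C(1) C(5) neC wC] by blast
    have P: "ptrail p (vs1 @ tl vs2) (rotate k1 es @ rotate k2 esC)"
      using ptrail_append[OF R1(1) R2(1)] R1(3) R2(2) by simp
    have l2: "length vs2 = Suc (length esC)" using ptrail_len[OF R2(1)] by simp
    have tl2: "tl vs2 \<noteq> []" using l2 neC by (cases vs2) auto
    have ne1: "vs1 \<noteq> []" using ptrail_ne[OF R1(1)] .
    have hdN: "hd (vs1 @ tl vs2) = w" using ne1 R1(2) by simp
    have lastN: "last (vs1 @ tl vs2) = w" using tl2 R2(3) by (simp add: last_tl)
    have dN: "distinct (rotate k1 es @ rotate k2 esC)" using T(2) C(2) C(3) dis by auto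
    have sN: "set (rotate k1 es @ rotate k2 esC) \<subseteq> E" using T(3) C(3) FE by auto
    have lN: "length es < length (rotate k1 es @ rotate k2 esC)" using neC by simp
    show ?thesis using gp P hdN lastN dN sN lN T(4)
      by (intro exI[of _ p] exI[of _ "vs1 @ tl vs2"] exI[of _ "rotate k1 es @ rotate k2 esC"]) auto
  next
    case False
    then have disj: "\<forall>f\<in>F. p f \<inter> set vs = {}" by blast
    obtain g0 where g0: "g0 \<in> set es" using T(4) by (cases es) auto
    obtain f0 where f0: "f0 \<in> F" using ne T(3) unfolding F_def by blast
    have "(g0, f0) \<in> {(a, b). L2_adj E inc a b}\<^sup>*" using con g0 f0 T(3) FE unfolding L2_connected_def by blast
    then obtain g f where gf: "L2_adj E inc g f" "g \<in> set es" "f \<notin> set es"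
      using cross[of g0 f0 _ "set es"] g0 f0 dis by blast
    have fE: "f \<in> E" and gE: "g \<in> E" and fg: "f \<noteq> g" and cI: "card (inc g \<inter> inc f) = 2"
      using gf(1) unfolding L2_adj_def by auto
    have fF: "f \<in> F" using fE gf(3) unfolding F_def by blast
    define I where "I = inc f \<inter> inc g"
    have cI2: "card I = 2" using cI unfolding I_def by (simp add: Int_commute)
    have fininc: "finite (inc x)" if "x \<in> E" for x using c3 that by (metis card.infinite zero_neq_numeral)
    have pg: "p g \<subseteq> inc g" "card (p g) = 2" using gp gE unfolding goodp_def by auto
    have pf: "p f \<subseteq> inc f" "card (p f) = 2" using gp fE unfolding goodp_def by auto
    have pgV: "p g \<subseteq> set vs" using ptrail_edge_sub[OF T(1) gf(2)] .
    have pfV: "p f \<inter> set vs = {}" using disj fF by blast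
    have "p g \<inter> I \<noteq> {}"
      using inter_ne[OF pg(1) _ fininc[OF gE]] pg(2) cI2 c3 gE unfolding I_def by auto
    then obtain x' where x': "x' \<in> p g" "x' \<in> I" by blast
    have "p f \<inter> I \<noteq> {}"
      using inter_ne[OF pf(1) _ fininc[OF fE]] pf(2) cI2 c3 fE unfolding I_def by auto
    then obtain y' where y': "y' \<in> p f" "y' \<in> I" by blast
    have xy: "x' \<noteq> y'" using x'(1) y'(1) pgV pfV by blast
    have Ieq: "I = {x', y'}"
    proof -
      obtain z where "I = {x', z}" "x' \<noteq> z" using two_elem[OF cI2 x'(2)] by blast
      then show ?thesis using y'(2) xy by auto
    qed
    obtain b' where b': "p g = {x', b'}" "x' \<noteq> b'" using two_elem[OF pg(2) x'(1)] by blast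
    obtain a' where a': "p f = {y', a'}" "y' \<noteq> a'" using two_elem[OF pf(2) y'(1)] by blast
    have a'g: "a' \<notin> inc g"
    proof
      assume "a' \<in> inc g"
      then have "a' \<in> I" using a' pf(1) unfolding I_def by auto
      then have "a' = x'" using Ieq a'(2) by auto
      then show False using a' pfV x'(1) pgV by blast
    qed
    have b'f: "b' \<notin> inc f"
    proof
      assume "b' \<in> inc f"
      then have "b' \<in> I" using b' pg(1) unfolding I_def by auto
      then have "b' = y'" using Ieq b'(2) by auto
      then show False using b' pfV y'(1) pgV by blast
    qed
    have x'inc: "x' \<in> inc f" "x' \<in> inc g" using x'(2) unfolding I_def by auto
    have y'inc: "y' \<in> inc f" "y' \<in> inc g" using y'(2) unfolding I_def by auto
    have a'inc: "a' \<in> inc f" using a' pf(1) by auto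
    have b'inc: "b' \<in> inc g" using b' pg(1) by auto
    have d1: "x' \<noteq> a'" using x'inc a'g by blast
    have d2: "y' \<noteq> b'" using y'inc b'f by blast
    have d3: "a' \<noteq> b'" using a'g b'inc by blast
    define p' where "p' = p(f := {x', a'}, g := {y', b'})"
    have p'f: "p' f = {x', a'}" unfolding p'_def using fg by simp
    have p'g: "p' g = {y', b'}" unfolding p'_def by simp
    have p'o: "p' e = p e" if "e \<noteq> f" "e \<noteq> g" for e unfolding p'_def using that by simp
    have part1: "\<forall>e\<in>E. p' e \<subseteq> inc e \<and> card (p' e) = 2"
    proof
      fix e assume e: "e \<in> E"
      show "p' e \<subseteq> inc e \<and> card (p' e) = 2"
      proof (cases "e = f")
        case True then show ?thesis using p'f x'inc a'inc d1 by simp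
      next
        case False
        show ?thesis
        proof (cases "e = g")
          case True then show ?thesis using p'g y'inc b'inc d2 by simp
        next
          case False
          then show ?thesis using p'o[OF \<open>e \<noteq> f\<close> False] gp e unfolding goodp_def by simp
        qed
      qed
    qed
    have part2: "evenp E p'" unfolding evenp_def
    proof
      fix v
      have c1: "card {e\<in>E. v \<in> p' e} = card {e\<in>E - {f,g}. v \<in> p' e} + (if v \<in> p' f then 1 else 0) + (if v \<in> p' g then 1 else 0)"
        using card_split2[OF finE fE gE fg] .
      have c2: "card {e\<in>E. v \<in> p e} = card {e\<in>E - {f,g}. v \<in> p e} + (if v \<in> p f then 1 else 0) + (if v \<in> p g then 1 else 0)"
        using card_split2[OF finE fE gE fg] .
      have same: "{e\<in>E - {f,g}. v \<in> p' e} = {e\<in>E - {f,g}. v \<in> p e}" using p'o by auto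
      have "(if v \<in> p' f then 1 else 0) + (if v \<in> p' g then 1 else 0) = ((if v \<in> p f then 1 else 0) + (if v \<in> p g then 1 else 0) :: nat)"
        unfolding p'f p'g a'(1) b'(1) using xy d1 d2 d3 a'(2) b'(2) by auto
      then have "card {e\<in>E. v \<in> p' e} = card {e\<in>E. v \<in> p e}" using c1 c2 same by simp
      then show "even (card {e\<in>E. v \<in> p' e})" using gp unfolding goodp_def evenp_def by simp
    qed
    have gp': "goodp E inc p'" using part1 part2 unfolding goodp_def by blast
    obtain vsT esT rvT reT where RT: "ptrail p vsT esT" "hd vsT = last vsT" "distinct esT" "set esT = set es"
        "length esT = length es" "vsT = x' # b' # rvT" "esT = g # reT"
      using rot_edge[OF T(1) T(5) T(2) gf(2) b'(1)] by blast
    obtain vsC esC where C: "ptrail p vsC esC" "distinct esC" "set esC \<subseteq> F" "f \<in> set esC" "hd vsC = last vsC"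
      using closed_through[OF finF evF c2F fF] by blast
    obtain vsC' esC' rvC reC where RC: "ptrail p vsC' esC'" "hd vsC' = last vsC'" "distinct esC'" "set esC' = set esC"
        "length esC' = length esC" "vsC' = y' # a' # rvC" "esC' = f # reC"
      using rot_edge[OF C(1) C(5) C(2) C(4) a'(1)] by blast
    have tT: "ptrail p (b' # rvT) reT" using RT(1) RT(6) RT(7) by simp
    have tC: "ptrail p (a' # rvC) reC" using RC(1) RC(6) RC(7) by simp
    have lT: "last (b' # rvT) = x'" using RT(2) RT(6) by simp
    have lC: "last (a' # rvC) = y'" using RC(2) RC(6) by simp
    have reT_s: "set reT \<subseteq> set es" "f \<notin> set reT" "g \<notin> set reT" "distinct reT"
      using RT(3) RT(4) RT(7) gf(3) by auto
    have reC_s: "set reC \<subseteq> F" "f \<notin> set reC" "g \<notin> set reC" "distinct reC"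
      using RC(3) RC(4) RC(7) C(3) gf(2) unfolding F_def by auto
    have tT': "ptrail p' (b' # rvT) reT"
      using tT ptrail_cong[of reT p p'] p'o reT_s(2,3) by metis
    have tC': "ptrail p' (a' # rvC) reC"
      using tC ptrail_cong[of reC p p'] p'o reC_s(2,3) by metis
    have tg: "ptrail p' [y', b'] [g]" using p'g d2 by simp
    have s1: "ptrail p' ((a' # rvC) @ [b']) (reC @ [g])"
      using ptrail_append[OF tC' tg] lC by simp
    have s2: "ptrail p' (((a' # rvC) @ [b']) @ rvT) ((reC @ [g]) @ reT)"
      using ptrail_append[OF s1 tT'] by simp
    define vsN where "vsN = x' # ((a' # rvC) @ [b']) @ rvT"
    define esN where "esN = f # (reC @ [g]) @ reT"
    have PN: "ptrail p' vsN esN" unfolding vsN_def esN_def using s2 p'f d1 by simp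
    have hN: "hd vsN = last vsN"
    proof -
      have "last vsN = last (b' # rvT)" unfolding vsN_def by (cases rvT) auto
      then show ?thesis using lT unfolding vsN_def by simp
    qed
    have dN: "distinct esN" unfolding esN_def using reT_s reC_s dis fg by auto
    have sN: "set esN \<subseteq> E" unfolding esN_def using reT_s(1) reC_s(1) T(3) FE fE gE by auto
    have lN: "length es < length esN" unfolding esN_def using RT(5) RT(7) by simp
    show ?thesis using gp' PN hN dN sN lN
      by (intro exI[of _ p'] exI[of _ vsN] exI[of _ esN]) (auto simp: esN_def)
  qed
qed



theorem corollary2p37:
  fixes V :: "'v set" and E :: "'e set" and inc :: "'e \<Rightarrow> 'v set"
  assumes "hypergraph V E inc"
    and "uniform3 E inc"
    and "E \<noteq> {}"
    and "\<forall>v\<in>V. hdegree E inc v \<noteq> 1"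
    and "L2_connected E inc"
  shows "eulerian V E inc"
proof -
  have finE: "finite E" and incV: "\<forall>e\<in>E. inc e \<subseteq> V" using assms(1) unfolding hypergraph_def by auto
  have c3: "\<forall>e\<in>E. card (inc e) = 3" using assms(2) unfolding uniform3_def by auto
  have deg2: "\<forall>e\<in>E. \<forall>v\<in>inc e. \<exists>e'\<in>E. e' \<noteq> e \<and> v \<in> inc e'"
  proof (intro ballI)
    fix e v assume e: "e \<in> E" and v: "v \<in> inc e"
    have vV: "v \<in> V" using incV e v by blast
    show "\<exists>e'\<in>E. e' \<noteq> e \<and> v \<in> inc e'"
    proof (rule ccontr)
      assume "\<not> ?thesis"
      then have "{e'\<in>E. v \<in> inc e'} = {e}" using e v by auto
      then have "hdegree E inc v = 1" unfolding hdegree_def by simp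
      then show False using assms(4) vV by blast
    qed
  qed
  have G: "Good inc E" using grow[OF finE assms(3) c3 deg2 assms(5)] .
  obtain p0 where p0: "goodp E inc p0" using even_sel[OF finE c3 G] unfolding goodp_def by blast
  define Q where "Q n \<longleftrightarrow> (\<exists>p vs es. goodp E inc p \<and> ptrail p vs es \<and> distinct es \<and> set es \<subseteq> E \<and> es \<noteq> [] \<and>
      hd vs = last vs \<and> length es = n)" for n
  obtain e0 where e0: "e0 \<in> E" using assms(3) by blast
  have evp0: "evenp E p0" and c2p0: "\<forall>e\<in>E. card (p0 e) = 2" using p0 unfolding goodp_def by auto
  obtain vs0 es0 where T0: "ptrail p0 vs0 es0" "distinct es0" "set es0 \<subseteq> E" "e0 \<in> set es0" "hd vs0 = last vs0"
    using closed_through[OF finE evp0 c2p0 e0] by blast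
  have Q0: "Q (length es0)" unfolding Q_def using p0 T0 by (intro exI[of _ p0] exI[of _ vs0] exI[of _ es0]) auto
  have bnd: "\<forall>y. Q y \<longrightarrow> y \<le> card E"
  proof (intro allI impI)
    fix y assume "Q y"
    then obtain es where "distinct es" "set es \<subseteq> E" "length es = y" unfolding Q_def by blast
    then show "y \<le> card E" using finE by (metis card_mono distinct_card)
  qed
  obtain n where n: "Q n" "\<forall>y. Q y \<longrightarrow> y \<le> n" using Nat.ex_has_greatest_nat[OF Q0 bnd] by blast
  then obtain p vs es where T: "goodp E inc p" "ptrail p vs es" "distinct es" "set es \<subseteq> E" "es \<noteq> []"
      "hd vs = last vs" "length es = n" unfolding Q_def by blast
  have all: "set es = E"
  proof (rule ccontr)
    assume "set es \<noteq> E"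
    then obtain p' vs' es' where "goodp E inc p'" "ptrail p' vs' es'" "distinct es'" "set es' \<subseteq> E" "es' \<noteq> []"
      "hd vs' = last vs'" "length es < length es'"
      using extend[OF finE c3 assms(5) T(1) T(2) T(3) T(4) T(5) T(6)] by blast
    then have "Q (length es')" unfolding Q_def by blast
    then show False using n(2) T(7) \<open>length es < length es'\<close> by fastforce
  qed
  have pinc: "\<forall>e\<in>E. p e \<subseteq> inc e" using T(1) unfolding goodp_def by blast
  have walk: "is_walk V E inc vs es"
    unfolding is_walk_def
  proof (intro conjI allI impI)
    show "length vs = Suc (length es)" using ptrail_len[OF T(2)] .
    show "set vs \<subseteq> V" using ptrail_verts[OF T(2) T(5)] pinc incV T(4) by blast
    show "set es \<subseteq> E" using T(4) .
    fix i assume i: "i < length es"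
    have nt: "vs!i \<noteq> vs!Suc i \<and> p (es!i) = {vs!i, vs!Suc i}" using ptrail_nth[OF T(2) i] .
    have "es!i \<in> E" using T(4) i by auto
    then have "p (es!i) \<subseteq> inc (es!i)" using pinc by blast
    then show "vs ! i \<noteq> vs ! Suc i" "vs ! i \<in> inc (es ! i)" "vs ! Suc i \<in> inc (es ! i)" using nt by auto
  qed
  have "is_euler_tour V E inc vs es"
    unfolding is_euler_tour_def is_closed_walk_def is_strict_trail_def
    using walk ptrail_closed_len[OF T(2) T(5) T(6)] T(6) T(3) all by blast
  then show ?thesis unfolding eulerian_def by blast
qed

end
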